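(* Let $k\ge 2$ and $n\ge 1$ be integers, $E=\{0,\dots,k-1\}$, and let $L_n\subseteq E^n$ and $\varphi:L_n\to E^{n-1}$ be as defined in the context. Then $\varphi$ is a bijection, and for every $A\subseteq L_n$, $A$ is an intersecting antichain in $E^n$ if and only if $\varphi(A)$ is an intersecting antichain in $E^{n-1}$ (equivalently, both $\varphi$ and $\varphi^{-1}$ map intersecting antichains to intersecting antichains).
   Context: For $\mathbf a=(a_1,\dots,a_m),\mathbf b=(b_1,\dots,b_m)\in E^m$ write $\mathbf a\preceq\mathbf b$ if $a_i\le b_i$ for all $i$. A set $A\subseteq E^m$ is an antichain if there are no distinct $\mathbf a,\mathbf b\in A$ with $\mathbf a\preceq\mathbf b$. A set $A\subseteq E^m$ is intersecting if for all $\mathbf a,\mathbf b\in A$ (including $\mathbf a=\mathbf b$) there is $i$ with $a_i+b_i\ge k$. The weight is $w(\mathbf a)=a_1+\dots+a_m$, and $\mathcal B_t=\{\mathbf a\in E^n: w(\mathbf a)=t\}$. Let $g=\lfloor n(k-1)/2\rfloor$ and $C_i=\{\mathbf a\in E^n: a_1=i\}$. Define $L_n=(\mathcal B_0\cup\dots\cup\mathcal B_g)\cap(C_0\cup C_{k-1})$ if $n(k-1)$ is odd, and $L_n=((\mathcal B_0\cup\dots\cup\mathcal B_{g-1})\cap(C_0\cup C_{k-1}))\cup(\mathcal B_g\cap C_0)$ if $n(k-1)$ is even. For $a\in E$ let $\overline a=k-1-a$. Define $\varphi(a_1,\dots,a_n)=(a_2,\dots,a_n)$ if $a_1=0$, and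 $\varphi(a_1,\dots,a_n)=(\overline{a}_2,\dots,\overline{a}_n)$ if $a_1=k-1$. *)

theory Defs
  imports Main
begin

definition vecs :: "nat \<Rightarrow> nat \<Rightarrow> nat list set" where
  "vecs k m = {a. length a = m \<and> (\<forall>x\<in>set a. x < k)}"

definition vle :: "nat list \<Rightarrow> nat list \<Rightarrow> bool" where
  "vle a b = list_all2 (\<le>) a b"

definition antichain_in :: "nat \<Rightarrow> nat \<Rightarrow> nat list set \<Rightarrow> bool" where
  "antichain_in k m A \<longleftrightarrow> A \<subseteq> vecs k m \<and>
     (\<forall>a\<in>A. \<forall>b\<in>A. a \<noteq> b \<longrightarrow> \<not> vle a b)"

definition intersecting_in :: "nat \<Rightarrow> nat \<Rightarrow> nat list set \<Rightarrow> bool" where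
  "intersecting_in k m A \<longleftrightarrow> A \<subseteq> vecs k m \<and>
     (\<forall>a\<in>A. \<forall>b\<in>A. \<exists>i<m. a ! i + b ! i \<ge> k)"

definition weight :: "nat list \<Rightarrow> nat" where
  "weight a = sum_list a"

text \<open>The set L_n (first coordinate a_1 is a ! 0).\<close>
definition Lset :: "nat \<Rightarrow> nat \<Rightarrow> nat list set" where
  "Lset k n = (let g = n * (k - 1) div 2 in
     if odd (n * (k - 1)) then
       {a \<in> vecs k n. weight a \<le> g \<and> (a ! 0 = 0 \<or> a ! 0 = k - 1)}
     else
       {a \<in> vecs k n. (weight a < g \<and> (a ! 0 = 0 \<or> a ! 0 = k - 1))
                      \<or> (weight a = g \<and> a ! 0 = 0)})"

definition bar :: "nat \<Rightarrow> nat \<Rightarrow> nat" where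
  "bar k a = k - 1 - a"

definition phi :: "nat \<Rightarrow> nat list \<Rightarrow> nat list" where
  "phi k a = (if a ! 0 = 0 then tl a else map (bar k) (tl a))"

end

theory Submission
  imports Defs
begin

lemma bar_sum:
  assumes "\<forall>x\<in>set b. x < k"
  shows "sum_list (map (bar k) b) + sum_list b = length b * (k - 1)"
  using assms by (induction b) (auto simp: bar_def)

lemma bar_bar: "x < k \<Longrightarrow> bar k (bar k x) = x"
  by (simp add: bar_def)

lemma map_bar_bar: "\<forall>x\<in>set b. x < k \<Longrightarrow> map (bar k) (map (bar k) b) = b"
  by (induction b) (auto simp: bar_bar)

lemma sum_pair_ge:
  assumes "length a = length b" "\<forall>i<length a. c \<le> a ! i + b ! i"
  shows "length a * c \<le> sum_list a + sum_list b"
  using assms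
proof (induction a b rule: list_induct2)
  case Nil then show ?case by simp
next
  case (Cons x xs y ys)
  have "length xs * c \<le> sum_list xs + sum_list ys"
    using Cons by (metis Suc_mono length_Cons nth_Cons_Suc)
  moreover have "c \<le> x + y" using Cons.prems[rule_format, of 0] by simp
  ultimately show ?case by simp
qed

lemma vle_nth: "vle a b \<longleftrightarrow> length a = length b \<and> (\<forall>i<length a. a ! i \<le> b ! i)"
  unfolding vle_def by (simp add: list_all2_conv_all_nth)

lemma Lset_iff:
  assumes "k \<ge> 2"
  shows "a \<in> Lset k n \<longleftrightarrow> a \<in> vecs k n \<and>
     ((a ! 0 = 0 \<and> 2 * weight a \<le> n * (k - 1)) \<or> (a ! 0 = k - 1 \<and> 2 * weight a < n * (k - 1)))"
proof -
  have k: "k - 1 \<noteq> 0" using assms by simp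
  obtain N where N: "N = n * (k - 1)" by blast
  have o: "odd N \<Longrightarrow> (w \<le> N div 2 \<longleftrightarrow> 2 * w \<le> N) \<and> (w \<le> N div 2 \<longleftrightarrow> 2 * w < N)" for w
    by (auto elim!: oddE)
  have e: "even N \<Longrightarrow> (w < N div 2 \<longleftrightarrow> 2 * w < N) \<and> (w = N div 2 \<longleftrightarrow> 2 * w = N)" for w
    by (auto elim!: evenE)
  show ?thesis unfolding Lset_def Let_def N[symmetric]
    using o[of "weight a"] e[of "weight a"] k by auto
qed

lemma vecs_Cons: "x # a \<in> vecs k (Suc m) \<longleftrightarrow> x < k \<and> a \<in> vecs k m"
  by (auto simp: vecs_def)

lemma vecs_Suc: "a \<in> vecs k (Suc m) \<Longrightarrow> \<exists>x a'. a = x # a'"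
  by (cases a) (auto simp: vecs_def)

lemma map_bar_vecs: "a \<in> vecs k m \<Longrightarrow> k \<ge> 1 \<Longrightarrow> map (bar k) a \<in> vecs k m"
  by (auto simp: vecs_def bar_def)

lemma L_Cons:
  assumes "k \<ge> 2"
  shows "x # a \<in> Lset k (Suc m) \<longleftrightarrow> x < k \<and> a \<in> vecs k m \<and>
     ((x = 0 \<and> 2 * sum_list a \<le> Suc m * (k - 1)) \<or> (x = k - 1 \<and> 2 * (k - 1 + sum_list a) < Suc m * (k - 1)))"
  using Lset_iff[OF assms] by (auto simp: vecs_Cons weight_def)

lemma phi_bij:
  assumes k: "k \<ge> 2"
  shows "bij_betw (phi k) (Lset k (Suc m)) (vecs k m)"
proof (rule bij_betw_imageI)
  show "inj_on (phi k) (Lset k (Suc m))"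
  proof (rule inj_onI)
    fix a b assume a: "a \<in> Lset k (Suc m)" and b: "b \<in> Lset k (Suc m)" and eq: "phi k a = phi k b"
    obtain x a' where ax: "a = x # a'" using a vecs_Suc Lset_iff[OF k] by blast
    obtain y b' where bx: "b = y # b'" using b vecs_Suc Lset_iff[OF k] by blast
    note A = a[unfolded ax L_Cons[OF k]] and B = b[unfolded bx L_Cons[OF k]]
    have sa: "sum_list (map (bar k) a') + sum_list a' = m * (k - 1)"
      using bar_sum[of a' k] A by (auto simp: vecs_def)
    have sb: "sum_list (map (bar k) b') + sum_list b' = m * (k - 1)"
      using bar_sum[of b' k] B by (auto simp: vecs_def)
    have ba: "map (bar k) (map (bar k) a') = a'" using map_bar_bar[of a' k] A by (auto simp: vecs_def)
    have bb: "map (bar k) (map (bar k) b') = b'" using map_bar_bar[of b' k] B by (auto simp: vecs_def)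
    consider "x = 0" "y = 0" | "x = k - 1" "y = k - 1" | "x = 0" "y = k - 1" | "x = k - 1" "y = 0"
      using A B by blast
    then show "a = b"
    proof cases
      case 1 then show ?thesis using eq ax bx by (simp add: phi_def)
    next
      case 2 then have "map (bar k) a' = map (bar k) b'" using eq ax bx k by (simp add: phi_def)
      then show ?thesis using ba bb ax bx 2 by metis
    next
      case 3 then have "a' = map (bar k) b'" using eq ax bx k by (simp add: phi_def)
      then show ?thesis using A B 3 sb k by (auto simp: algebra_simps)
    next
      case 4 then have "b' = map (bar k) a'" using eq ax bx k by (simp add: phi_def)
      then show ?thesis using A B 4 sa k by (auto simp: algebra_simps)
    qed
  qed
next
  show "phi k ` Lset k (Suc m) = vecs k m"
  proof
    show "phi k ` Lset k (Suc m) \<subseteq> vecs k m"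
    proof
      fix c assume "c \<in> phi k ` Lset k (Suc m)"
      then obtain a where a: "a \<in> Lset k (Suc m)" and c: "c = phi k a" by blast
      obtain x a' where ax: "a = x # a'" using a vecs_Suc Lset_iff[OF k] by blast
      note A = a[unfolded ax L_Cons[OF k]]
      show "c \<in> vecs k m" using A c ax map_bar_vecs[of a' k m] k by (auto simp: phi_def)
    qed
  next
    show "vecs k m \<subseteq> phi k ` Lset k (Suc m)"
    proof
      fix b assume b: "b \<in> vecs k m"
      have sb: "sum_list (map (bar k) b) + sum_list b = m * (k - 1)"
        using bar_sum[of b k] b by (auto simp: vecs_def)
      have bb: "map (bar k) (map (bar k) b) = b" using map_bar_bar[of b k] b by (auto simp: vecs_def)
      show "b \<in> phi k ` Lset k (Suc m)"
      proof (cases "2 * sum_list b \<le> Suc m * (k - 1)")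
        case True
        then have "0 # b \<in> Lset k (Suc m)" using b k by (simp add: L_Cons)
        moreover have "phi k (0 # b) = b" by (simp add: phi_def)
        ultimately show ?thesis by force
      next
        case False
        then have "(k - 1) # map (bar k) b \<in> Lset k (Suc m)"
          using b k sb map_bar_vecs[of b k m] by (simp add: L_Cons algebra_simps)
        moreover have "phi k ((k - 1) # map (bar k) b) = b" using k bb by (simp add: phi_def)
        ultimately show ?thesis by force
      qed
    qed
  qed
qed

lemma bar_le_iff: "x < k \<Longrightarrow> y < k \<Longrightarrow> (k - Suc x \<le> k - Suc y \<longleftrightarrow> y \<le> x)"
  by arith

definition PP :: "nat \<Rightarrow> nat \<Rightarrow> nat list \<Rightarrow> nat list \<Rightarrow> bool" where
  "PP k m a b \<longleftrightarrow> (\<exists>i<m. k \<le> a ! i + b ! i) \<and> (a \<noteq> b \<longrightarrow> \<not> vle a b)"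

lemma ex_Cons: "(\<exists>i<Suc m. k \<le> (x # a) ! i + (y # b) ! i) \<longleftrightarrow> k \<le> x + y \<or> (\<exists>i<m. k \<le> a ! i + b ! i)"
  by (auto simp: less_Suc_eq_0_disj)

lemma vle_Cons: "vle (x # a) (y # b) \<longleftrightarrow> x \<le> y \<and> vle a b"
  by (simp add: vle_def)

lemma pair_core:
  assumes k: "k \<ge> 2"
    and a: "x # a \<in> Lset k (Suc m)" and b: "y # b \<in> Lset k (Suc m)"
    and nb: "\<not> (x = k - 1 \<and> y = 0)"
    and inj: "phi k (x # a) = phi k (y # b) \<longleftrightarrow> x # a = y # b"
  shows "(PP k (Suc m) (x # a) (y # b) \<and> PP k (Suc m) (y # b) (x # a)) \<longleftrightarrow>
         (PP k m (phi k (x # a)) (phi k (y # b)) \<and> PP k m (phi k (y # b)) (phi k (x # a)))"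
proof -
  note A = a[unfolded L_Cons[OF k]] and B = b[unfolded L_Cons[OF k]]
  have la: "length a = m" and lb: "length b = m" using A B by (auto simp: vecs_def)
  have ak: "\<forall>i<m. a ! i < k" and bk: "\<forall>i<m. b ! i < k" using A B by (auto simp: vecs_def)
  define K where "K = k - 1"
  have K: "K \<ge> 1" "k = Suc K" using k by (auto simp: K_def)
  consider "x = 0" "y = 0" | "x = K" "y = K" | "x = 0" "y = K"
    using A B nb K_def by blast
  then show ?thesis
  proof cases
    case 1
    then show ?thesis using inj k by (simp add: PP_def phi_def ex_Cons vle_Cons)
  next
    case 2
    have s1: "2 * (K + sum_list a) < Suc m * K" and s2: "2 * (K + sum_list b) < Suc m * K"
      using A B 2 k unfolding K_def by auto
    have ex: "\<exists>i<m. k \<le> map (bar k) a ! i + map (bar k) b ! i"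
    proof (rule ccontr)
      assume "\<not> ?thesis"
      then have "\<forall>i<length a. K \<le> a ! i + b ! i"
        using ak bk la lb K by (auto simp: bar_def not_le)
      then have "length a * K \<le> sum_list a + sum_list b" using sum_pair_ge[of a b K] la lb by simp
      then show False using s1 s2 la by simp
    qed
    have v1: "vle (map (bar k) a) (map (bar k) b) \<longleftrightarrow> vle b a"
      using ak bk la lb by (auto simp: vle_nth bar_def bar_le_iff)
    have v2: "vle (map (bar k) b) (map (bar k) a) \<longleftrightarrow> vle a b"
      using ak bk la lb by (auto simp: vle_nth bar_def bar_le_iff)
    have ex2: "\<exists>i<m. k \<le> map (bar k) b ! i + map (bar k) a ! i" using ex by (simp add: add.commute)
    show ?thesis using 2 inj ex ex2 v1 v2 K
      by (simp add: PP_def phi_def ex_Cons vle_Cons) (metis add.commute)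
  next
    case 3
    have s1: "2 * sum_list a \<le> Suc m * K" and s2: "2 * (K + sum_list b) < Suc m * K"
      using A B 3 k unfolding K_def by auto
    have p1: "\<forall>i<m. (k \<le> a ! i + map (bar k) b ! i \<longleftrightarrow> b ! i < a ! i)"
      using ak bk lb K by (auto simp: bar_def)
    have p2: "\<forall>i<m. (a ! i \<le> map (bar k) b ! i \<longleftrightarrow> \<not> k \<le> a ! i + b ! i)"
      using ak bk lb K by (auto simp: bar_def)
    have e1: "(\<exists>i<m. k \<le> a ! i + map (bar k) b ! i) \<longleftrightarrow> \<not> vle a b"
      using p1 la lb by (auto simp: vle_nth not_le)
    have e1': "(\<exists>i<m. k \<le> map (bar k) b ! i + a ! i) \<longleftrightarrow> \<not> vle a b"
      using e1 by (simp add: add.commute)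
    have e2: "vle a (map (bar k) b) \<longleftrightarrow> \<not> (\<exists>i<m. k \<le> a ! i + b ! i)"
      using p2 la lb by (auto simp: vle_nth)
    have e3: "\<not> vle (map (bar k) b) a"
    proof
      assume "vle (map (bar k) b) a"
      then have "\<forall>i<length a. K \<le> a ! i + b ! i"
        using ak bk la lb K by (auto simp: vle_nth bar_def bar_le_iff)
      then have "length a * K \<le> sum_list a + sum_list b" using sum_pair_ge[of a b K] la lb by simp
      then show False using s1 s2 la by simp
    qed
    have ne: "x # a \<noteq> y # b" using 3 K by simp
    have e4: "(\<exists>i<m. k \<le> b ! i + a ! i) \<longleftrightarrow> (\<exists>i<m. k \<le> a ! i + b ! i)"
      by (simp add: add.commute)
    show ?thesis using 3 inj ne e1 e1' e2 e3 e4 K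
      by (simp add: PP_def phi_def ex_Cons vle_Cons) blast
  qed
qed

lemma pair_all:
  assumes k: "k \<ge> 2" and a: "a \<in> Lset k (Suc m)" and b: "b \<in> Lset k (Suc m)"
  shows "(PP k (Suc m) a b \<and> PP k (Suc m) b a) \<longleftrightarrow>
         (PP k m (phi k a) (phi k b) \<and> PP k m (phi k b) (phi k a))"
proof -
  obtain x a' where ax: "a = x # a'" using a vecs_Suc Lset_iff[OF k] by blast
  obtain y b' where bx: "b = y # b'" using b vecs_Suc Lset_iff[OF k] by blast
  have inj: "inj_on (phi k) (Lset k (Suc m))" using phi_bij[OF k] bij_betw_def by blast
  have i1: "phi k a = phi k b \<longleftrightarrow> a = b" using inj a b by (meson inj_on_eq_iff)
  have i2: "phi k b = phi k a \<longleftrightarrow> b = a" using i1 by auto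
  show ?thesis
  proof (cases "x = k - 1 \<and> y = 0")
    case True
    then have "\<not> (y = k - 1 \<and> x = 0)" using k by auto
    from pair_core[OF k b[unfolded bx] a[unfolded ax] this i2[unfolded ax bx]]
    show ?thesis using ax bx by blast
  next
    case False
    from pair_core[OF k a[unfolded ax] b[unfolded bx] this i1[unfolded ax bx]]
    show ?thesis using ax bx by blast
  qed
qed

lemma ia_iff: "(intersecting_in k m A \<and> antichain_in k m A) \<longleftrightarrow>
   A \<subseteq> vecs k m \<and> (\<forall>a\<in>A. \<forall>b\<in>A. PP k m a b)"
  by (auto simp: PP_def intersecting_in_def antichain_in_def)

theorem theorem1:
  fixes k n :: nat
  assumes "k \<ge> 2" and "n \<ge> 1"
  shows "bij_betw (phi k) (Lset k n) (vecs k (n - 1)) \<and>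
    (\<forall>A. A \<subseteq> Lset k n \<longrightarrow>
       ((intersecting_in k n A \<and> antichain_in k n A) \<longleftrightarrow>
        (intersecting_in k (n - 1) (phi k ` A) \<and> antichain_in k (n - 1) (phi k ` A))))"
proof -
  obtain m where n: "n = Suc m" using assms(2) by (cases n) auto
  have bij: "bij_betw (phi k) (Lset k (Suc m)) (vecs k m)" by (rule phi_bij[OF assms(1)])
  have "(intersecting_in k (Suc m) A \<and> antichain_in k (Suc m) A) \<longleftrightarrow>
        (intersecting_in k m (phi k ` A) \<and> antichain_in k m (phi k ` A))"
    if A: "A \<subseteq> Lset k (Suc m)" for A
  proof -
    have s1: "A \<subseteq> vecs k (Suc m)" using A Lset_iff[OF assms(1)] by blast
    have s2: "phi k ` A \<subseteq> vecs k m" using A bij bij_betw_imp_surj_on by blast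
    have "(\<forall>a\<in>A. \<forall>b\<in>A. PP k (Suc m) a b) \<longleftrightarrow>
          (\<forall>a\<in>A. \<forall>b\<in>A. PP k (Suc m) a b \<and> PP k (Suc m) b a)" by blast
    also have "\<dots> \<longleftrightarrow> (\<forall>a\<in>A. \<forall>b\<in>A. PP k m (phi k a) (phi k b) \<and> PP k m (phi k b) (phi k a))"
      using pair_all[OF assms(1)] A by (meson subsetD)
    also have "\<dots> \<longleftrightarrow> (\<forall>x\<in>phi k ` A. \<forall>y\<in>phi k ` A. PP k m x y)" by blast
    finally show ?thesis unfolding ia_iff using s1 s2 by blast
  qed
  then show ?thesis using bij n by simp
qed

end
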